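(* Let $(T,\rho_{T})$ and $(Z,\rho_{Z})$ be metric spaces, and define the metric $\rho_{T}\times\rho_{Z}$ on $T\times Z$ by $(\rho_{T}\times\rho_{Z})((t_{1},z_{1}),(t_{2},z_{2}))=\rho_{T}(t_{1},t_{2})+\rho_{Z}(z_{1},z_{2})$. Then \[\gamma_{2}(T\times Z,\rho_{T}\times\rho_{Z})\leq 3\gamma_{2}(T,\rho_{T})+3\gamma_{2}(Z,\rho_{Z}).\]
   Context: Let $N_{0}=1$ and $N_{k}=2^{2^{k}}$ for $k\geq1$. For a metric space $(T,\rho)$, a sequence $T_{0},T_{1},\ldots\subset T$ is admissible if $|T_{k}|\leq N_{k}$ for all $k\geq0$, and \[\gamma_{2}(T,\rho)=\inf_{\text{admissible }(T_{k})}\ \sup_{t\in T}\sum_{k=0}^{\infty}2^{k/2}\rho(t,T_{k}),\] where $\rho(t,T_{k})=\inf_{t_{k}\in T_{k}}\rho(t,t_{k})$. *)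

theory Defs
  imports "HOL-Analysis.Analysis"
begin

definition Nk :: "nat \<Rightarrow> nat" where
  "Nk k = (if k = 0 then 1 else 2 ^ (2 ^ k))"

text \<open>Distance from a point to a set; the infimum of the empty set is +infinity.\<close>
definition dist_set :: "('a \<Rightarrow> 'a \<Rightarrow> real) \<Rightarrow> 'a \<Rightarrow> 'a set \<Rightarrow> ennreal" where
  "dist_set \<rho> t A = (INF s\<in>A. ennreal (\<rho> t s))"

definition admissible :: "'a set \<Rightarrow> (nat \<Rightarrow> 'a set) \<Rightarrow> bool" where
  "admissible T Ts \<longleftrightarrow> (\<forall>k. Ts k \<subseteq> T \<and> finite (Ts k) \<and> card (Ts k) \<le> Nk k)"

definition gamma2 :: "'a set \<Rightarrow> ('a \<Rightarrow> 'a \<Rightarrow> real) \<Rightarrow> ennreal" where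
  "gamma2 T \<rho> = (INF Ts\<in>{Ts. admissible T Ts}.
      SUP t\<in>T. (\<Sum>k. ennreal (2 powr (real k / 2)) * dist_set \<rho> t (Ts k)))"

definition sum_metric :: "('a \<Rightarrow> 'a \<Rightarrow> real) \<Rightarrow> ('b \<Rightarrow> 'b \<Rightarrow> real)
    \<Rightarrow> ('a \<times> 'b) \<Rightarrow> ('a \<times> 'b) \<Rightarrow> real" where
  "sum_metric \<rho>T \<rho>Z p q = \<rho>T (fst p) (fst q) + \<rho>Z (snd p) (snd q)"

end

theory Submission
  imports Defs
begin

lemma ennreal_add_INF: "c + (INF i\<in>I. f i) = (INF i\<in>I. c + f i :: ennreal)"
proof (cases "I = {}")
  case True then show ?thesis by simp
next
  case False
  have "(\<lambda>x. c + x) (Inf (f ` I)) = (INF s\<in>f ` I. (\<lambda>x. c + x) s)"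
    by (rule continuous_at_Inf_mono) (auto simp: mono_def False intro!: continuous_intros)
  then show ?thesis by (simp add: image_comp)
qed

lemma ennreal_mult_INF:
  assumes "(c::ennreal) \<noteq> 0" "c < top"
  shows "c * (INF i\<in>I. f i) = (INF i\<in>I. c * f i :: ennreal)"
proof (cases "I = {}")
  case True then show ?thesis using assms by (simp add: ennreal_mult_top)
next
  case False
  have "(\<lambda>x. c * x) (Inf (f ` I)) = (INF s\<in>f ` I. (\<lambda>x. c * x) s)"
  proof (rule continuous_at_Inf_mono)
    show "continuous (at_right (Inf (f ` I))) ((*) c)"
    proof -
      have "continuous_on UNIV (\<lambda>x. c * x)"
        using assms(2) by (intro ennreal_continuous_on_cmult continuous_on_id)
      then have "continuous (at (Inf (f ` I))) ((*) c)"
        by (simp add: continuous_on_eq_continuous_within)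
      then show ?thesis by (rule continuous_within_subset) simp
    qed
  qed (auto simp: mono_def False mult_left_mono)
  then show ?thesis by (simp add: image_comp)
qed

lemma ennreal_plus_le: "ennreal (x + y) \<le> ennreal x + ennreal y"
proof (cases "x \<ge> 0 \<and> y \<ge> 0")
  case True then show ?thesis by (simp add: ennreal_plus)
next
  case False
  then consider "x < 0" | "y < 0" by linarith
  then show ?thesis
  proof cases
    case 1
    then have "ennreal (x + y) \<le> ennreal y" by (intro ennreal_leI) simp
    then show ?thesis by (simp add: add_increasing)
  next
    case 2
    then have "ennreal (x + y) \<le> ennreal x" by (intro ennreal_leI) simp
    then show ?thesis by (simp add: add_increasing2)
  qed
qed

lemma dist_set_prod:
  "dist_set (sum_metric \<rho>T \<rho>Z) (t, z) (A \<times> B) \<le> dist_set \<rho>T t A + dist_set \<rho>Z z B"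
proof -
  have "dist_set \<rho>T t A + dist_set \<rho>Z z B
      = (INF a\<in>A. INF b\<in>B. ennreal (\<rho>T t a) + ennreal (\<rho>Z z b))"
    unfolding dist_set_def
    by (subst add.commute, subst ennreal_add_INF, subst add.commute, subst ennreal_add_INF) simp
  moreover have "dist_set (sum_metric \<rho>T \<rho>Z) (t, z) (A \<times> B) \<le> \<dots>"
  proof (intro le_INF_iff[THEN iffD2] ballI)
    fix a b assume "a \<in> A" "b \<in> B"
    then have "dist_set (sum_metric \<rho>T \<rho>Z) (t, z) (A \<times> B) \<le> ennreal (sum_metric \<rho>T \<rho>Z (t, z) (a, b))"
      unfolding dist_set_def by (intro INF_lower) auto
    also have "\<dots> \<le> ennreal (\<rho>T t a) + ennreal (\<rho>Z z b)"
      unfolding sum_metric_def by (simp add: ennreal_plus_le)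
    finally show "dist_set (sum_metric \<rho>T \<rho>Z) (t, z) (A \<times> B) \<le> ennreal (\<rho>T t a) + ennreal (\<rho>Z z b)" .
  qed
  ultimately show ?thesis by simp
qed

lemma Nk_sq: "Nk m * Nk m \<le> Nk (Suc m)"
proof (cases "m = 0")
  case True then show ?thesis by (simp add: Nk_def)
next
  case False
  have "Nk m * Nk m = 2 ^ (2 ^ m + 2 ^ m)" using False by (simp add: Nk_def power_add)
  also have "\<dots> = Nk (Suc m)" by (simp add: Nk_def mult_2)
  finally show ?thesis by simp
qed

lemma admissible_prod:
  assumes A: "admissible T A" and B: "admissible Z B"
  shows "admissible (T \<times> Z) (\<lambda>k. if k = 0 then A 0 \<times> B 0 else A (k - 1) \<times> B (k - 1))"
  unfolding admissible_def
proof (intro allI conjI)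
  fix k
  show "(if k = 0 then A 0 \<times> B 0 else A (k - 1) \<times> B (k - 1)) \<subseteq> T \<times> Z"
    using A B unfolding admissible_def by auto
  show "finite (if k = 0 then A 0 \<times> B 0 else A (k - 1) \<times> B (k - 1))"
    using A B unfolding admissible_def by auto
  show "card (if k = 0 then A 0 \<times> B 0 else A (k - 1) \<times> B (k - 1)) \<le> Nk k"
  proof (cases k)
    case 0
    have "card (A 0) \<le> Nk 0" "card (B 0) \<le> Nk 0" using A B unfolding admissible_def by blast+
    then have "card (A 0) \<le> 1" "card (B 0) \<le> 1" by (simp_all add: Nk_def)
    then have "card (A 0) * card (B 0) \<le> 1 * 1" by (intro mult_le_mono)
    then show ?thesis using 0 by (simp add: card_cartesian_product Nk_def)
  next
    case (Suc m)
    have "card (A m) \<le> Nk m" "card (B m) \<le> Nk m" using A B unfolding admissible_def by auto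
    then have "card (A m) * card (B m) \<le> Nk m * Nk m" by (intro mult_le_mono)
    then show ?thesis using Suc Nk_sq[of m] by (simp add: card_cartesian_product)
  qed
qed


lemma series_bound:
  fixes f g :: "nat \<Rightarrow> ennreal"
  assumes f0: "f 0 \<le> g 0" and fS: "\<And>j. f (Suc j) \<le> ennreal (sqrt 2) * g j"
  shows "(\<Sum>k. f k) \<le> 3 * (\<Sum>k. g k)"
proof -
  have "(\<Sum>k. f k) = (\<Sum>j. f (j + 1)) + (\<Sum>j<1. f j)"
    by (rule suminf_offset) simp
  also have "\<dots> = (\<Sum>j. f (Suc j)) + f 0" by simp
  also have "\<dots> \<le> (\<Sum>j. ennreal (sqrt 2) * g j) + g 0"
    by (intro add_mono f0 suminf_le fS) auto
  also have "\<dots> = ennreal (sqrt 2) * (\<Sum>j. g j) + g 0" by simp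
  also have "\<dots> \<le> 2 * (\<Sum>j. g j) + (\<Sum>j. g j)"
  proof (intro add_mono mult_right_mono)
    have "sqrt 2 \<le> sqrt 4" by (rule real_sqrt_le_mono) simp
    also have "sqrt 4 = (2::real)" by (simp add: real_sqrt_unique)
    finally have "sqrt 2 \<le> (2::real)" .
    then show "ennreal (sqrt 2) \<le> 2" using ennreal_leI by fastforce
    show "g 0 \<le> (\<Sum>j. g j)"
      using sum_le_suminf[of g "{0}"] by auto
  qed auto
  also have "\<dots> = (2 + 1) * (\<Sum>j. g j)" by (simp only: distrib_right mult_1)
  also have "\<dots> = 3 * (\<Sum>j. g j)" by simp
  finally show ?thesis .
qed

lemma prod_bound:
  assumes A: "admissible T A" and B: "admissible Z B"
  shows "gamma2 (T \<times> Z) (sum_metric \<rho>T \<rho>Z) \<le>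
    3 * (SUP t\<in>T. (\<Sum>k. ennreal (2 powr (real k / 2)) * dist_set \<rho>T t (A k))) +
    3 * (SUP z\<in>Z. (\<Sum>k. ennreal (2 powr (real k / 2)) * dist_set \<rho>Z z (B k)))"
    (is "_ \<le> 3 * (SUP t\<in>T. ?SA t) + 3 * (SUP z\<in>Z. ?SB z)")
proof -
  define C where "C = (\<lambda>k. if k = 0 then A 0 \<times> B 0 else A (k - 1) \<times> B (k - 1))"
  have adm: "admissible (T \<times> Z) C" unfolding C_def by (rule admissible_prod[OF A B])
  let ?w = "\<lambda>k::nat. ennreal (2 powr (real k / 2))"
  have "gamma2 (T \<times> Z) (sum_metric \<rho>T \<rho>Z) \<le>
      (SUP p\<in>T \<times> Z. (\<Sum>k. ?w k * dist_set (sum_metric \<rho>T \<rho>Z) p (C k)))"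
    unfolding gamma2_def by (rule INF_lower) (simp add: adm)
  also have "\<dots> \<le> 3 * (SUP t\<in>T. ?SA t) + 3 * (SUP z\<in>Z. ?SB z)"
  proof (rule SUP_least)
    fix p assume "p \<in> T \<times> Z"
    then obtain t z where p: "p = (t, z)" "t \<in> T" "z \<in> Z" by auto
    define g where "g = (\<lambda>k. ?w k * (dist_set \<rho>T t (A k) + dist_set \<rho>Z z (B k)))"
    have "(\<Sum>k. ?w k * dist_set (sum_metric \<rho>T \<rho>Z) p (C k)) \<le> 3 * (\<Sum>k. g k)"
    proof (rule series_bound)
      show "?w 0 * dist_set (sum_metric \<rho>T \<rho>Z) p (C 0) \<le> g 0"
        unfolding g_def C_def p by (simp add: dist_set_prod)
      fix j
      have w: "?w (Suc j) = ennreal (sqrt 2) * ?w j"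
      proof -
        have "2 powr (real (Suc j) / 2) = 2 powr (1/2) * 2 powr (real j / 2)"
          by (simp add: powr_add[symmetric] add_divide_distrib)
        also have "\<dots> = sqrt 2 * 2 powr (real j / 2)" by (simp add: powr_half_sqrt)
        finally show ?thesis by (simp add: ennreal_mult)
      qed
      show "?w (Suc j) * dist_set (sum_metric \<rho>T \<rho>Z) p (C (Suc j)) \<le> ennreal (sqrt 2) * g j"
        unfolding g_def C_def p w mult.assoc
        by (simp add: mult_left_mono dist_set_prod)
    qed
    also have "(\<Sum>k. g k) = ?SA t + ?SB z"
      unfolding g_def distrib_left by (rule suminf_add[symmetric]) auto
    also have "3 * (?SA t + ?SB z) \<le> 3 * (SUP t\<in>T. ?SA t) + 3 * (SUP z\<in>Z. ?SB z)"
      unfolding distrib_left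
      by (intro add_mono mult_left_mono SUP_upper p) auto
    finally show "(\<Sum>k. ?w k * dist_set (sum_metric \<rho>T \<rho>Z) p (C k)) \<le> 3 * (SUP t\<in>T. ?SA t) + 3 * (SUP z\<in>Z. ?SB z)" .
  qed
  finally show ?thesis .
qed

theorem lemma2p1:
  fixes T :: "'a set" and \<rho>T :: "'a \<Rightarrow> 'a \<Rightarrow> real"
    and Z :: "'b set" and \<rho>Z :: "'b \<Rightarrow> 'b \<Rightarrow> real"
  assumes "Metric_space T \<rho>T" and "Metric_space Z \<rho>Z"
  shows "gamma2 (T \<times> Z) (sum_metric \<rho>T \<rho>Z) \<le> 3 * gamma2 T \<rho>T + 3 * gamma2 Z \<rho>Z"
proof -
  let ?SA = "\<lambda>A. (SUP t\<in>T. (\<Sum>k. ennreal (2 powr (real k / 2)) * dist_set \<rho>T t (A k)))"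
  let ?SB = "\<lambda>B. (SUP z\<in>Z. (\<Sum>k. ennreal (2 powr (real k / 2)) * dist_set \<rho>Z z (B k)))"
  have "3 * gamma2 T \<rho>T + 3 * gamma2 Z \<rho>Z
     = (INF A\<in>{A. admissible T A}. 3 * ?SA A) + (INF B\<in>{B. admissible Z B}. 3 * ?SB B)"
    unfolding gamma2_def by (simp add: ennreal_mult_INF)
  also have "\<dots> = (INF A\<in>{A. admissible T A}. 3 * ?SA A + (INF B\<in>{B. admissible Z B}. 3 * ?SB B))"
    by (subst add.commute, subst ennreal_add_INF) (simp add: add.commute)
  also have "\<dots> = (INF A\<in>{A. admissible T A}. INF B\<in>{B. admissible Z B}. 3 * ?SA A + 3 * ?SB B)"
    by (simp add: ennreal_add_INF)
  finally have eq: "3 * gamma2 T \<rho>T + 3 * gamma2 Z \<rho>Z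
     = (INF A\<in>{A. admissible T A}. INF B\<in>{B. admissible Z B}. 3 * ?SA A + 3 * ?SB B)" .
  have "gamma2 (T \<times> Z) (sum_metric \<rho>T \<rho>Z) \<le> (INF A\<in>{A. admissible T A}. INF B\<in>{B. admissible Z B}. 3 * ?SA A + 3 * ?SB B)"
    by (intro le_INF_iff[THEN iffD2] ballI prod_bound) auto
  then show ?thesis using eq by simp
qed

end
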